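(* Let $W\subset\operatorname{Sym}(n,\mathbb{R})$ be a non-trivial linear subspace and let $A\in W$ have maximal rank $r\ge3$ in $W$. Then there is $\varepsilon>0$ such that for every $B\in W$ with $\|B-A\|<\varepsilon$ the following holds: if $\partial\Gamma_A$ and $\partial\Gamma_B$ are varieties of dimension $n-1$ and there is no point of $\partial\Gamma_A\cap\partial\Gamma_B$ at which they intersect transversally, then $\Gamma_A\subset\Gamma_B$ or $\Gamma_B\subset\Gamma_A$.
   Context: For $M\in\operatorname{Sym}(n,\mathbb{R})$, $Q_M(z)={}^tzMz$ and $\Gamma_M:=\{z\in\mathbb{R}^n:Q_M(z)\le0\}$. $A$ has maximal rank in $W$ if $\operatorname{rank}A=\max_{M\in W}\operatorname{rank}M$. $\partial\Gamma_M$ is the topological boundary; it is a variety of dimension $n-1$ if there is $z\in\partial\Gamma_M$ with $Mz\ne0$. $\partial\Gamma_A$ and $\partial\Gamma_B$ intersect transversally at $z\in\partial\Gamma_A\cap\partial\Gamma_B$ if $Az$ and $Bz$ are linearly independent. *)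

theory Defs
  imports "HOL-Analysis.Analysis"
begin

definition Sym :: "(real^'n^'n) set" where
  "Sym = {M. transpose M = M}"

definition Qf :: "real^'n^'n \<Rightarrow> real^'n \<Rightarrow> real" where
  "Qf M z = z \<bullet> (M *v z)"

definition Gamma :: "real^'n^'n \<Rightarrow> (real^'n) set" where
  "Gamma M = {z. Qf M z \<le> 0}"

definition max_rank_in :: "real^'n^'n \<Rightarrow> (real^'n^'n) set \<Rightarrow> bool" where
  "max_rank_in A W \<longleftrightarrow> A \<in> W \<and> (\<forall>M\<in>W. rank M \<le> rank A)"

text \<open>The boundary of Gamma_M is a variety of dimension n-1.\<close>
definition bdry_hypersurface :: "real^'n^'n \<Rightarrow> bool" where
  "bdry_hypersurface M \<longleftrightarrow> (\<exists>z\<in>frontier (Gamma M). M *v z \<noteq> 0)"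

definition lin_indep2 :: "real^'n \<Rightarrow> real^'n \<Rightarrow> bool" where
  "lin_indep2 u v \<longleftrightarrow> (\<forall>a b. a *\<^sub>R u + b *\<^sub>R v = 0 \<longrightarrow> a = 0 \<and> b = 0)"

definition transversal_at :: "real^'n^'n \<Rightarrow> real^'n^'n \<Rightarrow> real^'n \<Rightarrow> bool" where
  "transversal_at A B z \<longleftrightarrow> z \<in> frontier (Gamma A) \<and> z \<in> frontier (Gamma B) \<and> lin_indep2 (A *v z) (B *v z)"

end

theory Submission
  imports Defs
begin

lemma sym_bil: fixes M :: "real^'n^'n" assumes "transpose M = M" shows "x \<bullet> (M *v y) = y \<bullet> (M *v x)"
proof -
  have "x \<bullet> (M *v y) = (x v* M) \<bullet> y" by (rule dot_lmul_matrix[symmetric])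
  also have "x v* M = transpose M *v x" by simp
  finally show ?thesis using assms by (simp add: inner_commute)
qed

lemma Qf_lin_cont: fixes A :: "real^'n^'n" shows "isCont (\<lambda>B. Qf B x) A"
proof -
  have "linear (\<lambda>B::real^'n^'n. Qf B x)"
    by (rule linearI) (auto simp: Qf_def matrix_vector_mult_add_rdistrib inner_add_right
        scaleR_matrix_vector_assoc[symmetric])
  then show ?thesis by (simp add: linear_continuous_at linear_conv_bounded_linear)
qed

lemma Qf_cont: fixes M :: "real^'n^'n" shows "continuous_on UNIV (Qf M)"
  unfolding Qf_def[abs_def] by (intro continuous_intros)

lemma Qf_expand:
  fixes M :: "real^'n^'n" assumes "transpose M = M"
  shows "Qf M (x + t *\<^sub>R y) = Qf M x + 2*t*(x \<bullet> (M *v y)) + t^2 * Qf M y"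
proof -
  have "y \<bullet> (M *v x) = x \<bullet> (M *v y)" using sym_bil[OF assms] by simp
  then show ?thesis
    by (simp add: Qf_def matrix_vector_right_distrib matrix_vector_mult_scaleR inner_add_left
        inner_add_right power2_eq_square algebra_simps)
qed

lemma Qf_add:
  fixes M :: "real^'n^'n" assumes "transpose M = M"
  shows "Qf M (x + y) = Qf M x + 2*(x \<bullet> (M *v y)) + Qf M y"
  using Qf_expand[OF assms, of x 1 y] by simp

lemma Qf_scale: "Qf M (c *\<^sub>R x) = c^2 * Qf M x"
  by (simp add: Qf_def matrix_vector_mult_scaleR power2_eq_square)

lemma Qf_diff_mat: "Qf (B - c *\<^sub>R A) x = Qf B x - c * Qf A x"
  by (simp add: Qf_def matrix_vector_mult_diff_rdistrib scaleR_matrix_vector_assoc[symmetric]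
      inner_diff_right)

lemma small_pos:
  fixes b c e :: real assumes "0 < b" "0 < e" shows "\<exists>t>0. t < e \<and> 0 < b*t + c*t^2"
proof -
  define t where "t = min (e/2) (b/(2*(\<bar>c\<bar>+1)))"
  have t0: "t > 0" using assms by (simp add: t_def)
  have te: "t < e" using assms by (simp add: t_def)
  have tb: "t * (2*(\<bar>c\<bar>+1)) \<le> b"
  proof -
    have "t \<le> b/(2*(\<bar>c\<bar>+1))" by (simp add: t_def)
    then show ?thesis by (simp add: field_simps)
  qed
  have "(- \<bar>c\<bar>) * (t * t) \<le> c * (t*t)" by (rule mult_right_mono) auto
  then have "c*t^2 \<ge> - \<bar>c\<bar> * t * t" by (simp add: power2_eq_square)
  moreover have "\<bar>c\<bar> * t * t \<le> b * t / 2"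
  proof -
    have "2 * \<bar>c\<bar> * t \<le> b" using tb t0 by (simp add: algebra_simps)
    then have "(2 * \<bar>c\<bar> * t) * t \<le> b * t" using t0 by (simp add: mult_right_mono)
    then show ?thesis by simp
  qed
  ultimately have "b*t + c*t^2 \<ge> b*t/2" by linarith
  moreover have "b*t/2 > 0" using assms t0 by simp
  ultimately show ?thesis using t0 te by (intro exI[of _ t]) auto
qed

lemma small_neg:
  fixes a b c :: real assumes "a < 0" shows "\<exists>u>0. a + b*u + c*u^2 < 0"
proof -
  define u where "u = min 1 (-a/(2*(\<bar>b\<bar>+\<bar>c\<bar>+1)))"
  have dpos: "2*(\<bar>b\<bar>+\<bar>c\<bar>+1) > 0" by (smt (verit) abs_ge_zero)
  have u0: "u > 0" using assms dpos by (simp add: u_def divide_neg_pos)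
  have u1: "u \<le> 1" by (simp add: u_def)
  have ub: "u * (2*(\<bar>b\<bar>+\<bar>c\<bar>+1)) \<le> -a"
  proof -
    have "u \<le> -a/(2*(\<bar>b\<bar>+\<bar>c\<bar>+1))" by (simp add: u_def)
    then show ?thesis by (simp add: field_simps)
  qed
  have "u^2 \<le> u" using u0 u1 by (simp add: power2_eq_square mult_left_le)
  then have "c*u^2 \<le> \<bar>c\<bar> * u"
  proof -
    have "c*u^2 \<le> \<bar>c\<bar> * u^2" by (rule mult_right_mono) auto
    also have "\<dots> \<le> \<bar>c\<bar> * u" using \<open>u^2 \<le> u\<close> by (rule mult_left_mono) auto
    finally show ?thesis .
  qed
  moreover have "b*u \<le> \<bar>b\<bar>*u" using u0 by (simp add: mult_right_mono)
  ultimately have "a + b*u + c*u^2 \<le> a + (\<bar>b\<bar>+\<bar>c\<bar>)*u" by (simp add: algebra_simps)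
  also have "\<dots> < 0"
  proof -
    have "(\<bar>b\<bar>+\<bar>c\<bar>)*u \<le> -a/2" using ub u0 by (simp add: algebra_simps)
    then show ?thesis using assms by linarith
  qed
  finally show ?thesis using u0 by blast
qed

lemma frontier_pt:
  fixes M :: "real^'n^'n" assumes "transpose M = M" "Qf M z = 0" "M *v z \<noteq> 0"
  shows "z \<in> frontier (Gamma M)"
proof -
  have zin: "z \<in> closure (Gamma M)" using assms(2) closure_subset by (force simp: Gamma_def)
  have "z \<notin> interior (Gamma M)"
  proof
    assume "z \<in> interior (Gamma M)"
    then obtain e where e: "e > 0" "ball z e \<subseteq> Gamma M" by (meson mem_interior)
    let ?v = "M *v z"
    have nv: "norm ?v > 0" using assms(3) by simp
    have b: "2 * (?v \<bullet> ?v) > 0" using assms(3) by simp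
    obtain t where t: "t > 0" "t < e / norm ?v" "0 < (2 * (?v \<bullet> ?v))*t + Qf M ?v * t^2"
      using small_pos[OF b, of "e / norm ?v" "Qf M ?v"] e nv by auto
    have "Qf M (z + t *\<^sub>R ?v) = Qf M z + 2*t*(z \<bullet> (M *v ?v)) + t^2 * Qf M ?v"
      by (rule Qf_expand[OF assms(1)])
    also have "z \<bullet> (M *v ?v) = ?v \<bullet> ?v" using sym_bil[OF assms(1), of z ?v] by simp
    finally have "Qf M (z + t *\<^sub>R ?v) > 0" using t assms(2) by (simp add: algebra_simps)
    moreover have "z + t *\<^sub>R ?v \<in> ball z e"
      using t nv by (simp add: dist_norm field_simps)
    ultimately show False using e by (auto simp: Gamma_def)
  qed
  then show ?thesis using zin by (simp add: frontier_def)
qed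

lemma frontier_Q0:
  fixes M :: "real^'n^'n" assumes "z \<in> frontier (Gamma M)" shows "Qf M z = 0"
proof -
  have cl: "closed (Gamma M)"
    unfolding Gamma_def using closed_Collect_le[OF Qf_cont continuous_on_const, of M 0] by simp
  have "z \<in> Gamma M" using assms cl by (simp add: frontier_def)
  then have le: "Qf M z \<le> 0" by (simp add: Gamma_def)
  have op: "open {x. Qf M x < 0}"
    using open_Collect_less[OF Qf_cont continuous_on_const, of M 0] by simp
  have "z \<notin> interior (Gamma M)" using assms by (simp add: frontier_def)
  moreover have "{x. Qf M x < 0} \<subseteq> Gamma M" by (auto simp: Gamma_def)
  ultimately have "\<not> Qf M z < 0" using op interior_maximal by blast
  then show ?thesis using le by simp
qed

lemma indef:
  fixes A :: "real^'n^'n" assumes "transpose A = A" "Qf A z = 0" "A *v z \<noteq> 0"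
  shows "(\<exists>v. Qf A v < 0) \<and> (\<exists>w. Qf A w > 0)"
proof -
  let ?v = "A *v z"
  have b: "2 * (?v \<bullet> ?v) > 0" using assms(3) by simp
  have zz: "z \<bullet> (A *v ?v) = ?v \<bullet> ?v" using sym_bil[OF assms(1), of z ?v] by simp
  obtain t where t: "t > 0" "0 < (2 * (?v \<bullet> ?v))*t + Qf A ?v * t^2"
    using small_pos[OF b, of 1 "Qf A ?v"] by auto
  obtain t' where t': "t' > 0" "0 < (2 * (?v \<bullet> ?v))*t' + (- Qf A ?v) * t'^2"
    using small_pos[OF b, of 1 "- Qf A ?v"] by auto
  have "Qf A (z + t *\<^sub>R ?v) = (2 * (?v \<bullet> ?v))*t + Qf A ?v * t^2"
    using Qf_expand[OF assms(1), of z t ?v] assms(2) zz by (simp add: algebra_simps)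
  moreover have "Qf A (z + (-t') *\<^sub>R ?v) = - ((2 * (?v \<bullet> ?v))*t' + (- Qf A ?v) * t'^2)"
    using Qf_expand[OF assms(1), of z "-t'" ?v] assms(2) zz by (simp add: algebra_simps)
  ultimately show ?thesis using t t' by (metis neg_less_0_iff_less)
qed

lemma quad_roots:
  fixes a0 a1 a2 :: real assumes "a0 > 0" "a2 < 0"
  shows "\<exists>t1 t2. t1 < 0 \<and> 0 < t2 \<and> a0 + a1*t1 + a2*t1^2 = 0 \<and> a0 + a1*t2 + a2*t2^2 = 0"
proof -
  define d where "d = a1^2 - 4*a2*a0"
  have dpos: "d > a1^2" using assms by (simp add: d_def mult_neg_pos)
  define s where "s = sqrt d"
  have s2: "s^2 = d" using dpos unfolding s_def by (smt (verit) real_sqrt_pow2 zero_le_power2)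
  have s0: "s \<ge> 0" unfolding s_def using dpos by (smt (verit) real_sqrt_ge_zero zero_le_power2)
  have sa: "s > \<bar>a1\<bar>"
  proof (rule ccontr)
    assume "\<not> s > \<bar>a1\<bar>"
    then have "s \<le> \<bar>a1\<bar>" by simp
    then have "s^2 \<le> \<bar>a1\<bar>^2" using s0 by (rule power_mono)
    then show False using s2 dpos by simp
  qed
  define t1 where "t1 = (-a1 + s)/(2*a2)"
  define t2 where "t2 = (-a1 - s)/(2*a2)"
  have "t1 < 0" unfolding t1_def using sa assms(2) by (simp add: divide_pos_neg)
  moreover have "t2 > 0" unfolding t2_def using sa assms(2) by (simp add: divide_neg_neg)
  moreover have "a0 + a1*t1 + a2*t1^2 = 0"
  proof -
    have "2*a2*t1 + a1 = s" unfolding t1_def using assms(2) by simp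
    then have "(2*a2*t1 + a1)^2 = d" using s2 by simp
    then have "4*a2*(a0 + a1*t1 + a2*t1^2) = 0" unfolding d_def by (simp add: power2_eq_square algebra_simps)
    then show ?thesis using assms(2) by simp
  qed
  moreover have "a0 + a1*t2 + a2*t2^2 = 0"
  proof -
    have "2*a2*t2 + a1 = -s" unfolding t2_def using assms(2) by simp
    then have "(2*a2*t2 + a1)^2 = d" using s2 by simp
    then have "4*a2*(a0 + a1*t2 + a2*t2^2) = 0" unfolding d_def by (simp add: power2_eq_square algebra_simps)
    then show ?thesis using assms(2) by simp
  qed
  ultimately show ?thesis by blast
qed

lemma concave_pos:
  fixes b0 b1 b2 t1 t2 :: real
  assumes "t1 < 0" "0 < t2" "b2 < 0" "b0 + b1*t1 + b2*t1^2 \<ge> 0" "b0 + b1*t2 + b2*t2^2 \<ge> 0"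
  shows "b0 > 0"
proof -
  have eq: "t2*(b0 + b1*t1 + b2*t1^2) - t1*(b0 + b1*t2 + b2*t2^2) = (t2 - t1)*(b0 - b2*t1*t2)"
    by (simp add: power2_eq_square algebra_simps)
  have "t2*(b0 + b1*t1 + b2*t1^2) \<ge> 0" using assms by simp
  moreover have "(- t1)*(b0 + b1*t2 + b2*t2^2) \<ge> 0" using assms by (intro mult_nonneg_nonneg) auto
  ultimately have "(t2 - t1)*(b0 - b2*t1*t2) \<ge> 0" using eq by linarith
  then have "b0 - b2*t1*t2 \<ge> 0" using assms by (simp add: zero_le_mult_iff)
  moreover have "b2*t1*t2 > 0" using assms by (simp add: mult_neg_neg)
  ultimately show ?thesis by linarith
qed

lemma ray_lemma:
  fixes aa ab ac ba bb bc :: real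
  assumes "aa > 0" "ac < 0" "bc < 0"
    and "\<And>t. aa + ab*t + ac*t^2 = 0 \<Longrightarrow> ba + bb*t + bc*t^2 \<ge> 0"
  shows "ba > 0"
  using quad_roots[OF assms(1,2), of ab] concave_pos[OF _ _ assms(3)] assms(4) by blast

lemma incl1:
  fixes A B :: "real^'n^'n"
  assumes sA: "transpose A = A" and sB: "transpose B = B"
    and v: "Qf A v < 0" "Qf B v < 0" and h: "\<And>z. Qf A z = 0 \<Longrightarrow> Qf B z \<ge> 0"
  shows "Gamma B \<subseteq> Gamma A"
proof
  fix z assume "z \<in> Gamma B"
  then have zb: "Qf B z \<le> 0" by (simp add: Gamma_def)
  show "z \<in> Gamma A"
  proof (rule ccontr)
    assume "z \<notin> Gamma A"
    then have za: "Qf A z > 0" by (simp add: Gamma_def)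
    have "Qf B z > 0"
    proof (rule ray_lemma[where ab="2*(z \<bullet> (A *v v))" and bb="2*(z \<bullet> (B *v v))", OF za v(1) v(2)])
      fix t assume "Qf A z + 2*(z \<bullet> (A *v v))*t + Qf A v * t^2 = 0"
      then have "Qf A (z + t *\<^sub>R v) = 0" using Qf_expand[OF sA, of z t v] by (simp add: algebra_simps)
      then have "Qf B (z + t *\<^sub>R v) \<ge> 0" by (rule h)
      then show "Qf B z + 2*(z \<bullet> (B *v v))*t + Qf B v * t^2 \<ge> 0"
        using Qf_expand[OF sB, of z t v] by (simp add: algebra_simps)
    qed
    then show False using zb by simp
  qed
qed

lemma incl2:
  fixes A B :: "real^'n^'n"
  assumes sA: "transpose A = A" and sB: "transpose B = B"
    and w: "Qf A w > 0" "Qf B w > 0" and h: "\<And>z. Qf A z = 0 \<Longrightarrow> Qf B z \<le> 0"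
  shows "Gamma A \<subseteq> Gamma B"
proof
  fix z assume "z \<in> Gamma A"
  then have za: "Qf A z \<le> 0" by (simp add: Gamma_def)
  show "z \<in> Gamma B"
  proof (rule ccontr)
    assume "z \<notin> Gamma B"
    then have zb: "Qf B z > 0" by (simp add: Gamma_def)
    have "Qf A z \<noteq> 0" using h[of z] zb by linarith
    then have za': "- Qf A z > 0" using za by simp
    have "- Qf B z > 0"
    proof (rule ray_lemma[where ac="- Qf A w" and bc="- Qf B w" and ab="- 2*(z \<bullet> (A *v w))" and bb="- 2*(z \<bullet> (B *v w))", OF za'])
      show "- Qf A w < 0" "- Qf B w < 0" using w by auto
      fix t assume "- Qf A z + - 2*(z \<bullet> (A *v w))*t + - Qf A w*t^2 = 0"
      then have "Qf A (z + t *\<^sub>R w) = 0" using Qf_expand[OF sA, of z t w] by (simp add: algebra_simps)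
      then have "Qf B (z + t *\<^sub>R w) \<le> 0" by (rule h)
      then show "- Qf B z + - 2*(z \<bullet> (B *v w))*t + - Qf B w*t^2 \<ge> 0"
        using Qf_expand[OF sB, of z t w] by (simp add: algebra_simps)
    qed
    then show False using zb by simp
  qed
qed

definition phi :: "real^'n^'n \<Rightarrow> real^'n \<Rightarrow> real^'n \<Rightarrow> real^'n" where
  "phi A z h = (- Qf A h) *\<^sub>R z + (2 * ((A *v z) \<bullet> h)) *\<^sub>R h"

lemma phi_Q:
  fixes A :: "real^'n^'n" assumes sA: "transpose A = A" and z: "Qf A z = 0"
  shows "Qf A (phi A z h) = 0"
proof -
  have e1: "Qf A (phi A z h) = Qf A ((- Qf A h) *\<^sub>R z) + 2*(((- Qf A h) *\<^sub>R z) \<bullet> (A *v ((2 * ((A *v z) \<bullet> h)) *\<^sub>R h))) + Qf A ((2 * ((A *v z) \<bullet> h)) *\<^sub>R h)"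
    unfolding phi_def by (rule Qf_add[OF sA])
  have "z \<bullet> (A *v h) = (A *v z) \<bullet> h" using sym_bil[OF sA, of z h] by (simp add: inner_commute)
  then show ?thesis unfolding e1 Qf_scale using z
    by (simp add: matrix_vector_mult_scaleR power2_eq_square Qf_def algebra_simps)
qed

lemma phi_inner:
  fixes A :: "real^'n^'n"
  shows "phi A z h \<bullet> k = - Qf A h * (z \<bullet> k) + 2 * ((A *v z) \<bullet> h) * (h \<bullet> k)"
  unfolding phi_def by (simp add: inner_add_left inner_diff_left)

lemma rank_le2:
  fixes A :: "real^'n^'n"
  assumes "\<And>k. A *v k \<in> span {a, b}"
  shows "rank A \<le> 2"
proof -
  have "rank A = dim (range (\<lambda>x. A *v x))" by (rule rank_dim_range)
  also have "\<dots> \<le> card {a, b}" by (rule dim_le_card) (use assms in auto)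
  also have "\<dots> \<le> 2" by (simp add: card_insert_if)
  finally show ?thesis .
qed

lemma choose_z0:
  fixes A :: "real^'n^'n"
  assumes sA: "transpose A = A" and rk: "rank A \<ge> 3"
    and p: "Qf A p = 0" "A *v p \<noteq> 0" and q: "A *v q \<noteq> 0"
  shows "\<exists>z0. Qf A z0 = 0 \<and> (A *v z0) \<bullet> p \<noteq> 0 \<and> (A *v z0) \<bullet> q \<noteq> 0"
proof (rule ccontr)
  assume neg: "\<not> ?thesis"
  define a where "a = A *v p"
  define b where "b = A *v q"
  define c where "c = p \<bullet> b"
  define H where "H h = - Qf A h * c + 2 * (a \<bullet> h) * (h \<bullet> b)" for h
  have pa: "p \<bullet> a = 0" using p(1) by (simp add: a_def Qf_def)
  have H0: "H h = 0" if ah: "a \<bullet> h \<noteq> 0" for h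
  proof -
    let ?z = "phi A p h"
    have Qz: "Qf A ?z = 0" by (rule phi_Q[OF sA p(1)])
    have "(A *v ?z) \<bullet> p = ?z \<bullet> a" using sym_bil[OF sA, of ?z p] by (simp add: a_def inner_commute)
    also have "\<dots> = - Qf A h * (p \<bullet> a) + 2 * (a \<bullet> h) * (h \<bullet> a)" by (simp only: phi_inner a_def)
    also have "\<dots> = 2 * (a \<bullet> h) * (a \<bullet> h)" using pa by (simp add: inner_commute)
    finally have "(A *v ?z) \<bullet> p \<noteq> 0" using ah by simp
    moreover have "(A *v ?z) \<bullet> q = H h"
    proof -
      have "(A *v ?z) \<bullet> q = ?z \<bullet> b" using sym_bil[OF sA, of ?z q] by (simp add: b_def inner_commute)
      also have "\<dots> = H h" by (simp add: phi_inner H_def a_def c_def)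
      finally show ?thesis .
    qed
    moreover have "\<not> (Qf A ?z = 0 \<and> (A *v ?z) \<bullet> p \<noteq> 0 \<and> (A *v ?z) \<bullet> q \<noteq> 0)" using neg by blast
    ultimately show ?thesis using Qz by simp
  qed
  have Hall: "H h = 0" for h
  proof (cases "a \<bullet> h = 0")
    case False then show ?thesis by (rule H0)
  next
    case True
    have aa: "a \<bullet> a > 0" using p(2) by (simp add: a_def)
    have exp: "H (h + t *\<^sub>R a) = H h + t * (- 2 * c * (h \<bullet> (A *v a)) + 2 * (a \<bullet> a) * (h \<bullet> b)) + t^2 * (- Qf A a * c + 2 * (a \<bullet> a) * (a \<bullet> b))" for t
      unfolding H_def using Qf_expand[OF sA, of h t a] True
      by (simp add: inner_add_right inner_add_left power2_eq_square algebra_simps)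
    have nz: "a \<bullet> (h + t *\<^sub>R a) \<noteq> 0" if "t \<noteq> 0" for t
      using True that aa by (simp add: inner_add_right)
    have z: "H (h + t *\<^sub>R a) = 0" if "t \<noteq> 0" for t using H0[OF nz[OF that]] .
    obtain \<beta> \<gamma> where ex: "\<And>t. H (h + t *\<^sub>R a) = H h + t * \<beta> + t^2 * \<gamma>" using exp by blast
    have "H h + \<beta> + \<gamma> = 0" using ex[of 1] z[of 1] by simp
    moreover have "H h - \<beta> + \<gamma> = 0" using ex[of "-1"] z[of "-1"] by simp
    moreover have "H h + 2 * \<beta> + 4 * \<gamma> = 0" using ex[of 2] z[of 2] by simp
    ultimately show ?thesis by linarith
  qed
  define Hb where "Hb x y = - c * (x \<bullet> (A *v y)) + (a \<bullet> x) * (y \<bullet> b) + (a \<bullet> y) * (x \<bullet> b)" for x y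
  have pol: "H (x + y) = H x + H y + 2 * Hb x y" for x y
    unfolding H_def Hb_def using Qf_add[OF sA, of x y]
    by (simp add: inner_add_right inner_add_left algebra_simps)
  have Hb0: "Hb x y = 0" for x y using pol[of x y] Hall by simp
  show False
  proof (cases "c = 0")
    case True
    have "Hb a b = (a \<bullet> a) * (b \<bullet> b) + (a \<bullet> b) * (a \<bullet> b)"
      using True by (simp add: Hb_def inner_commute)
    moreover have "(a \<bullet> a) * (b \<bullet> b) > 0" using p(2) q by (simp add: a_def b_def)
    moreover have "(a \<bullet> b) * (a \<bullet> b) \<ge> 0" by simp
    ultimately show False using Hb0[of a b] by linarith
  next
    case False
    have "A *v k \<in> span {a, b}" for k
    proof -
      define w where "w = (1/c) *\<^sub>R ((b \<bullet> k) *\<^sub>R a + (a \<bullet> k) *\<^sub>R b)"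
      define v where "v = A *v k - w"
      have "v \<bullet> (A *v k) = ((a \<bullet> v) * (k \<bullet> b) + (a \<bullet> k) * (v \<bullet> b)) / c"
        using Hb0[of v k] False by (simp add: Hb_def field_simps)
      moreover have "v \<bullet> w = ((b \<bullet> k) * (v \<bullet> a) + (a \<bullet> k) * (v \<bullet> b)) / c"
        by (simp add: w_def inner_add_right)
      moreover have "v \<bullet> v = v \<bullet> (A *v k) - v \<bullet> w" by (metis v_def inner_diff_right)
      ultimately have "v \<bullet> v = 0"
        by (simp add: inner_commute[of a v] inner_commute[of k b])
      then have "A *v k = w" by (simp add: v_def)
      moreover have "w \<in> span {a, b}" unfolding w_def
        by (intro span_mul span_add) (auto intro: span_base)
      ultimately show ?thesis by simp
    qed
    then have "rank A \<le> 2" by (rule rank_le2)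
    then show False using rk by simp
  qed
qed

lemma quartic_large:
  fixes c0 c1 c2 c3 c4 :: real assumes "c4 > 0"
  shows "\<exists>T>0. c0 + c1*T + c2*T^2 + c3*T^3 + c4*T^4 > 0"
proof -
  define M where "M = \<bar>c0\<bar> + \<bar>c1\<bar> + \<bar>c2\<bar> + \<bar>c3\<bar>"
  define T where "T = 1 + M / c4"
  have M0: "M \<ge> 0" by (simp add: M_def)
  have T1: "T \<ge> 1" using M0 assms by (simp add: T_def)
  have cT: "c4 * T > M" using assms M0 by (simp add: T_def field_simps)
  have q1: "T^1 \<le> T^3" by (rule power_increasing) (use T1 in auto)
  have q2: "T^2 \<le> T^3" by (rule power_increasing) (use T1 in auto)
  have q0: "T^0 \<le> T^3" by (rule power_increasing) (use T1 in auto)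
  have p1: "T \<le> T^3" "T^2 \<le> T^3" "1 \<le> T^3" using q0 q1 q2 by simp_all
  have T3: "T^3 > 0" using T1 by simp
  have b0: "- c0 \<le> \<bar>c0\<bar> * T^3" using p1 by (smt (verit) abs_ge_zero mult_left_mono mult_cancel_left1)
  have b1: "- (c1*T) \<le> \<bar>c1\<bar> * T^3"
  proof -
    have "- (c1*T) \<le> \<bar>c1\<bar> * T" using T1 by (smt (verit) abs_mult abs_of_nonneg abs_ge_self minus_mult_left abs_minus_cancel)
    also have "\<dots> \<le> \<bar>c1\<bar> * T^3" using p1 by (simp add: mult_left_mono)
    finally show ?thesis .
  qed
  have b2: "- (c2*T^2) \<le> \<bar>c2\<bar> * T^3"
  proof -
    have "- (c2*T^2) \<le> \<bar>c2\<bar> * T^2" by (smt (verit) abs_mult abs_of_nonneg abs_ge_self minus_mult_left abs_minus_cancel zero_le_power2)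
    also have "\<dots> \<le> \<bar>c2\<bar> * T^3" using p1 by (simp add: mult_left_mono)
    finally show ?thesis .
  qed
  have b3: "- (c3*T^3) \<le> \<bar>c3\<bar> * T^3" using T3 by (smt (verit) abs_mult abs_of_nonneg abs_ge_self minus_mult_left abs_minus_cancel)
  have "c4*T^4 = (c4*T) * T^3" by (simp add: power_def algebra_simps)
  also have "\<dots> > M * T^3" using cT T3 by simp
  finally have "c4*T^4 > M * T^3" .
  moreover have "M * T^3 = \<bar>c0\<bar> * T^3 + \<bar>c1\<bar> * T^3 + \<bar>c2\<bar> * T^3 + \<bar>c3\<bar> * T^3" by (simp add: M_def algebra_simps)
  ultimately have "c0 + c1*T + c2*T^2 + c3*T^3 + c4*T^4 > 0" using b0 b1 b2 b3 by linarith
  then show ?thesis using T1 by (intro exI[of _ T]) auto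
qed

lemma quartic_contra:
  fixes f :: "real \<Rightarrow> real" and c0 c1 c2 c3 c4 :: real
  assumes f: "\<And>t. f t = c0 + c1*t + c2*t^2 + c3*t^3 + c4*t^4"
    and c0: "c0 < 0" and c4: "c4 > 0"
    and roots: "\<And>s. f s = 0 \<Longrightarrow> \<exists>r0 r1 r2. \<forall>t. f t = (t - s)^2 * (r0 + r1*t + r2*t^2)"
  shows False
proof -
  have fe: "f = (\<lambda>t. c0 + c1*t + c2*t^2 + c3*t^3 + c4*t^4)" using f by auto
  have cont: "continuous_on S f" for S unfolding fe by (intro continuous_intros)
  have ic: "isCont f x" for x unfolding fe by (intro continuous_intros)
  obtain T where T: "T > 0" "f T > 0" using quartic_large[OF c4, of c0 c1 c2 c3] f by auto
  obtain T' where T': "T' > 0" "c0 + (-c1)*T' + c2*T'^2 + (-c3)*T'^3 + c4*T'^4 > 0"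
    using quartic_large[OF c4, of c0 "-c1" c2 "-c3"] by auto
  have fT': "f (-T') > 0" using T'(2) by (simp add: f power2_eq_square power3_eq_cube power4_eq_xxxx)
  have f0: "f 0 < 0" using c0 by (simp add: f)
  obtain t2 where t2: "0 \<le> t2" "t2 \<le> T" "f t2 = 0"
    using IVT'[of f 0 0 T] f0 T cont by auto
  obtain t1 where t1: "-T' \<le> t1" "t1 \<le> 0" "f t1 = 0"
    using IVT2[of f 0 0 "-T'"] f0 fT' T' ic by auto
  have t2p: "t2 > 0" using t2 f0 by (metis order_le_less)
  have t1n: "t1 < 0" using t1 f0 by (metis order_le_less)
  obtain r0 r1 r2 where R1: "\<And>t. f t = (t - t1)^2 * (r0 + r1*t + r2*t^2)" using roots[OF t1(3)] by blast
  obtain s0 s1 s2 where R2: "\<And>t. f t = (t - t2)^2 * (s0 + s1*t + s2*t^2)" using roots[OF t2(3)] by blast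
  have ne: "(t2 - t1)^2 > 0" using t1n t2p by simp
  have Rt2: "r0 + r1*t2 + r2*t2^2 = 0" using R1[of t2] t2(3) ne by simp
  have d1: "(f has_real_derivative (2*(t2-t1)*(r0 + r1*t2 + r2*t2^2) + (t2-t1)^2*(r1 + 2*r2*t2))) (at t2)"
  proof -
    have "f = (\<lambda>t. (t - t1)^2 * (r0 + r1*t + r2*t^2))" using R1 by auto
    moreover have "((\<lambda>t. (t - t1)^2 * (r0 + r1*t + r2*t^2)) has_real_derivative (2*(t2-t1)*(r0 + r1*t2 + r2*t2^2) + (t2-t1)^2*(r1 + 2*r2*t2))) (at t2)"
      by (auto intro!: derivative_eq_intros simp: algebra_simps power2_eq_square)
    ultimately show ?thesis by simp
  qed
  have d2: "(f has_real_derivative 0) (at t2)"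
  proof -
    have "f = (\<lambda>t. (t - t2)^2 * (s0 + s1*t + s2*t^2))" using R2 by auto
    moreover have "((\<lambda>t. (t - t2)^2 * (s0 + s1*t + s2*t^2)) has_real_derivative 0) (at t2)"
      by (auto intro!: derivative_eq_intros simp: algebra_simps power2_eq_square)
    ultimately show ?thesis by simp
  qed
  have "(t2-t1)^2*(r1 + 2*r2*t2) = 0" using DERIV_unique[OF d1 d2] Rt2 by simp
  then have r1: "r1 = -2*r2*t2" using ne by simp
  then have r0: "r0 = r2*t2^2" using Rt2 by (simp add: power2_eq_square algebra_simps)
  have fform: "f t = r2 * ((t - t1)^2 * (t - t2)^2)" for t
    using R1[of t] r0 r1 by (simp add: power2_eq_square algebra_simps)
  have "f 0 = r2 * (t1^2 * t2^2)" using fform[of 0] by (simp add: power2_eq_square)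
  then have "r2 < 0" using f0 by (smt (verit) mult_nonneg_nonneg zero_le_power2)
  then have "f T \<le> 0" using fform[of T] by (simp add: mult_nonpos_nonneg)
  then show False using T by simp
qed

lemma perturb:
  fixes A B :: "real^'n^'n"
  assumes sA: "transpose A = A" and sB: "transpose B = B"
    and z: "Qf A z = 0" "A *v z \<noteq> 0" and p: "Qf A p = 0" "\<sigma> * Qf B p < 0"
  shows "\<exists>p'. Qf A p' = 0 \<and> A *v p' \<noteq> 0 \<and> \<sigma> * Qf B p' < 0"
proof (cases "A *v p = 0")
  case False then show ?thesis using p by blast
next
  case True
  obtain u where u: "u > 0" "\<sigma> * Qf B p + (\<sigma> * (2 * (p \<bullet> (B *v z)))) * u + (\<sigma> * Qf B z) * u^2 < 0"
    using small_neg[OF p(2)] by blast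
  have "p \<bullet> (A *v z) = z \<bullet> (A *v p)" by (rule sym_bil[OF sA])
  then have pz: "p \<bullet> (A *v z) = 0" using True by simp
  have "Qf A (p + u *\<^sub>R z) = 0" using Qf_expand[OF sA, of p u z] p(1) z(1) pz by simp
  moreover have "A *v (p + u *\<^sub>R z) \<noteq> 0" using True z(2) u(1)
    by (simp add: matrix_vector_right_distrib matrix_vector_mult_scaleR)
  moreover have "\<sigma> * Qf B (p + u *\<^sub>R z) < 0" using Qf_expand[OF sB, of p u z] u(2)
    by (simp add: algebra_simps)
  ultimately show ?thesis by blast
qed

lemma Qf_three:
  fixes M :: "real^'n^'n" assumes sM: "transpose M = M"
  shows "Qf M (x + t *\<^sub>R y + (t^2) *\<^sub>R z) = Qf M x + (2 * (x \<bullet> (M *v y))) * t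
     + (Qf M y + 2 * (x \<bullet> (M *v z))) * t^2 + (2 * (y \<bullet> (M *v z))) * t^3 + Qf M z * t^4"
proof -
  have "Qf M (x + t *\<^sub>R y + (t^2) *\<^sub>R z) = Qf M (x + t *\<^sub>R y) + 2 * (t^2) * ((x + t *\<^sub>R y) \<bullet> (M *v z)) + (t^2)^2 * Qf M z"
    by (rule Qf_expand[OF sM])
  also have "Qf M (x + t *\<^sub>R y) = Qf M x + 2*t*(x \<bullet> (M *v y)) + t^2 * Qf M y" by (rule Qf_expand[OF sM])
  finally show ?thesis by (simp add: inner_add_left power2_eq_square power3_eq_cube power4_eq_xxxx algebra_simps)
qed

lemma core:
  fixes A B :: "real^'n^'n"
  assumes sA: "transpose A = A" and sB: "transpose B = B" and rk: "rank A \<ge> 3"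
    and z': "Qf A z' = 0" "A *v z' \<noteq> 0"
    and p0: "Qf A p0 = 0" "Qf B p0 < 0" and q0: "Qf A q0 = 0" "Qf B q0 > 0"
  shows "\<exists>z. transversal_at A B z"
proof (rule ccontr)
  assume ntr: "\<not> (\<exists>z. transversal_at A B z)"
  obtain p where p: "Qf A p = 0" "A *v p \<noteq> 0" "1 * Qf B p < 0"
    using perturb[OF sA sB z', of p0 1] p0 by auto
  obtain q where q: "Qf A q = 0" "A *v q \<noteq> 0" "(-1) * Qf B q < 0"
    using perturb[OF sA sB z', of q0 "-1"] q0 by auto
  obtain z0 where z0: "Qf A z0 = 0" "(A *v z0) \<bullet> p \<noteq> 0" "(A *v z0) \<bullet> q \<noteq> 0"
    using choose_z0[OF sA rk p(1,2) q(2)] by blast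
  have Az0: "A *v z0 \<noteq> 0" using z0(2) by auto
  define W where "W t = phi A z0 (p + t *\<^sub>R q)" for t
  define w0 where "w0 = phi A z0 p"
  define w2 where "w2 = phi A z0 q"
  define w1 where "w1 = (-2*(p \<bullet> (A *v q))) *\<^sub>R z0 + (2*((A *v z0) \<bullet> p)) *\<^sub>R q + (2*((A *v z0) \<bullet> q)) *\<^sub>R p"
  have Wexp: "W t = w0 + t *\<^sub>R w1 + (t^2) *\<^sub>R w2" for t
  proof -
    have "Qf A (p + t *\<^sub>R q) = Qf A p + 2*t*(p \<bullet> (A *v q)) + t^2 * Qf A q" by (rule Qf_expand[OF sA])
    then show ?thesis unfolding W_def w0_def w1_def w2_def phi_def
      by (simp add: inner_add_right scaleR_add_right scaleR_add_left power2_eq_square algebra_simps)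
  qed
  have WQ: "Qf A (W t) = 0" for t unfolding W_def by (rule phi_Q[OF sA z0(1)])
  define f where "f t = Qf B (W t)" for t
  have fpoly: "f t = Qf B w0 + (2 * (w0 \<bullet> (B *v w1))) * t
     + (Qf B w1 + 2 * (w0 \<bullet> (B *v w2))) * t^2 + (2 * (w1 \<bullet> (B *v w2))) * t^3 + Qf B w2 * t^4" for t
    unfolding f_def Wexp by (rule Qf_three[OF sB])
  have c0: "Qf B w0 < 0"
  proof -
    have "w0 = (2*((A *v z0) \<bullet> p)) *\<^sub>R p" using p(1) by (simp add: w0_def phi_def)
    then have "Qf B w0 = (2*((A *v z0) \<bullet> p))^2 * Qf B p" by (simp add: Qf_scale)
    then show ?thesis using p(3) z0(2) by (simp add: mult_pos_neg)
  qed
  have c4: "Qf B w2 > 0"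
  proof -
    have "w2 = (2*((A *v z0) \<bullet> q)) *\<^sub>R q" using q(1) by (simp add: w2_def phi_def)
    then have "Qf B w2 = (2*((A *v z0) \<bullet> q))^2 * Qf B q" by (simp add: Qf_scale)
    then show ?thesis using q(3) z0(3) by simp
  qed
  have roots: "\<exists>r0 r1 r2. \<forall>t. f t = (t - s)^2 * (r0 + r1*t + r2*t^2)" if fs: "f s = 0" for s
  proof -
    define ws where "ws = W s"
    have lam: "\<exists>lm. (B - lm *\<^sub>R A) *v ws = 0"
    proof (cases "ws = 0 \<or> B *v ws = 0")
      case True then show ?thesis by (intro exI[of _ 0]) auto
    next
      case False
      then have ws0: "ws \<noteq> 0" and Bws: "B *v ws \<noteq> 0" by auto
      have Aws: "A *v ws \<noteq> 0"
      proof (cases "(A *v z0) \<bullet> (p + s *\<^sub>R q) = 0")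
        case True
        then have wsf: "ws = (- Qf A (p + s *\<^sub>R q)) *\<^sub>R z0" by (simp add: ws_def W_def phi_def)
        then have e: "A *v ws = (- Qf A (p + s *\<^sub>R q)) *\<^sub>R (A *v z0)"
          by (simp only: matrix_vector_mult_scaleR)
        have "Qf A (p + s *\<^sub>R q) \<noteq> 0" using ws0 wsf by auto
        then show ?thesis using e Az0 by simp
      next
        case False
        have "(A *v ws) \<bullet> z0 = ws \<bullet> (A *v z0)" using sym_bil[OF sA, of ws z0] by (simp add: inner_commute)
        also have "\<dots> = - Qf A (p + s *\<^sub>R q) * (z0 \<bullet> (A *v z0)) + 2 * ((A *v z0) \<bullet> (p + s *\<^sub>R q)) * ((p + s *\<^sub>R q) \<bullet> (A *v z0))"
          unfolding ws_def W_def by (rule phi_inner)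
        also have "\<dots> = 2 * ((A *v z0) \<bullet> (p + s *\<^sub>R q)) * ((A *v z0) \<bullet> (p + s *\<^sub>R q))"
          using z0(1) by (simp add: Qf_def inner_commute)
        finally have "(A *v ws) \<bullet> z0 \<noteq> 0" using False by simp
        then show ?thesis by auto
      qed
      have QA: "Qf A ws = 0" unfolding ws_def by (rule WQ)
      have QB: "Qf B ws = 0" using fs by (simp add: f_def ws_def)
      have fa: "ws \<in> frontier (Gamma A)" by (rule frontier_pt[OF sA QA Aws])
      have fb: "ws \<in> frontier (Gamma B)" by (rule frontier_pt[OF sB QB Bws])
      have "\<not> lin_indep2 (A *v ws) (B *v ws)" using ntr fa fb by (auto simp: transversal_at_def)
      then obtain a b where ab: "a *\<^sub>R (A *v ws) + b *\<^sub>R (B *v ws) = 0" "\<not> (a = 0 \<and> b = 0)"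
        by (auto simp: lin_indep2_def)
      have b0: "b \<noteq> 0" using ab Aws by auto
      have "(B - (-a/b) *\<^sub>R A) *v ws = (1/b) *\<^sub>R (a *\<^sub>R (A *v ws) + b *\<^sub>R (B *v ws))"
        using b0 by (simp add: matrix_vector_mult_diff_rdistrib scaleR_matrix_vector_assoc[symmetric] algebra_simps)
      then show ?thesis using ab(1) by (intro exI[of _ "-a/b"]) simp
    qed
    then obtain lm where Dws: "(B - lm *\<^sub>R A) *v ws = 0" by blast
    define D where "D = B - lm *\<^sub>R A"
    have "transpose D = transpose B - lm *\<^sub>R transpose A" unfolding D_def
      by (simp add: transpose_def vec_eq_iff)
    then have sD: "transpose D = D" using sA sB by (simp add: D_def)
    define r0 where "r0 = Qf D w1 + 2* s *(w1 \<bullet> (D *v w2)) + s^2 * Qf D w2"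
    define r1 where "r1 = 2*(w1 \<bullet> (D *v w2)) + 2* s *Qf D w2"
    define r2 where "r2 = Qf D w2"
    have "f t = (t - s)^2 * (r0 + r1*t + r2*t^2)" for t
    proof -
      have "f t = Qf D (W t)" using WQ[of t] by (simp add: f_def D_def Qf_diff_mat)
      also have "W t = ws + (t - s) *\<^sub>R (w1 + (t + s) *\<^sub>R w2)"
        unfolding ws_def Wexp by (simp add: power2_eq_square algebra_simps)
      also have "Qf D (ws + (t - s) *\<^sub>R (w1 + (t + s) *\<^sub>R w2)) = Qf D ws + 2*(t-s)*(ws \<bullet> (D *v (w1 + (t + s) *\<^sub>R w2))) + (t-s)^2 * Qf D (w1 + (t + s) *\<^sub>R w2)"
        by (rule Qf_expand[OF sD])
      also have "Qf D ws = 0" using Dws by (simp add: Qf_def D_def)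
      also have "ws \<bullet> (D *v (w1 + (t + s) *\<^sub>R w2)) = 0"
        using sym_bil[OF sD, of ws "w1 + (t + s) *\<^sub>R w2"] Dws by (simp add: D_def)
      also have "Qf D (w1 + (t + s) *\<^sub>R w2) = Qf D w1 + 2*(t+s)*(w1 \<bullet> (D *v w2)) + (t+s)^2 * Qf D w2"
        by (rule Qf_expand[OF sD])
      finally show ?thesis by (simp add: r0_def r1_def r2_def power2_eq_square algebra_simps)
    qed
    then show ?thesis by blast
  qed
  show False by (rule quartic_contra[OF fpoly c0 c4 roots])
qed

theorem corollary2p8:
  fixes W :: "(real^'n^'n) set" and A :: "real^'n^'n"
  assumes "subspace W" and "W \<subseteq> Sym" and "W \<noteq> {0}"
    and "max_rank_in A W" and "rank A \<ge> 3"
  shows "\<exists>\<epsilon>>0. \<forall>B\<in>W. norm (B - A) < \<epsilon> \<longrightarrow>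
           (bdry_hypersurface A \<and> bdry_hypersurface B \<and>
            \<not> (\<exists>z. transversal_at A B z))
           \<longrightarrow> (Gamma A \<subseteq> Gamma B \<or> Gamma B \<subseteq> Gamma A)"
proof -
  have AW: "A \<in> W" using assms(4) by (simp add: max_rank_in_def)
  have sA: "transpose A = A" using AW assms(2) by (auto simp: Sym_def)
  have bd: "\<exists>z'. Qf A z' = 0 \<and> A *v z' \<noteq> 0" if "bdry_hypersurface A"
    using that frontier_Q0 by (auto simp: bdry_hypersurface_def)
  show ?thesis
  proof (cases "\<exists>v w. Qf A v < 0 \<and> Qf A w > 0")
    case False
    have "\<not> bdry_hypersurface A"
    proof
      assume "bdry_hypersurface A"
      then obtain z' where "Qf A z' = 0" "A *v z' \<noteq> 0" using bd by blast
      then show False using indef[OF sA] False by blast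
    qed
    then show ?thesis by (intro exI[of _ 1]) auto
  next
    case True
    then obtain v w where v: "Qf A v < 0" and w: "Qf A w > 0" by blast
    obtain d1 where d1: "d1 > 0" "\<And>B. dist B A < d1 \<Longrightarrow> dist (Qf B v) (Qf A v) < - Qf A v"
      using Qf_lin_cont[where x=v and A=A] v unfolding continuous_at_eps_delta by (meson neg_0_less_iff_less)
    obtain d2 where d2: "d2 > 0" "\<And>B. dist B A < d2 \<Longrightarrow> dist (Qf B w) (Qf A w) < Qf A w"
      using Qf_lin_cont[where x=w and A=A] w unfolding continuous_at_eps_delta by meson
    show ?thesis
    proof (intro exI[of _ "min d1 d2"] conjI ballI impI)
      show "min d1 d2 > 0" using d1 d2 by simp
      fix B assume BW: "B \<in> W" and nB: "norm (B - A) < min d1 d2"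
        and H: "bdry_hypersurface A \<and> bdry_hypersurface B \<and> \<not> (\<exists>z. transversal_at A B z)"
      have sB: "transpose B = B" using BW assms(2) by (auto simp: Sym_def)
      have "dist B A < d1" "dist B A < d2" using nB by (auto simp: dist_norm)
      then have vB: "Qf B v < 0" and wB: "Qf B w > 0" using d1(2) d2(2) v w
        by (auto simp: dist_real_def abs_less_iff)
      obtain z' where z': "Qf A z' = 0" "A *v z' \<noteq> 0" using bd H by blast
      show "Gamma A \<subseteq> Gamma B \<or> Gamma B \<subseteq> Gamma A"
      proof (rule ccontr)
        assume nn: "\<not> (Gamma A \<subseteq> Gamma B \<or> Gamma B \<subseteq> Gamma A)"
        have "\<exists>q. Qf A q = 0 \<and> Qf B q > 0"
        proof (rule ccontr)
          assume "\<not> ?thesis"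
          then have "Gamma A \<subseteq> Gamma B" using incl2[OF sA sB w wB] by force
          then show False using nn by blast
        qed
        then obtain q where q: "Qf A q = 0" "Qf B q > 0" by blast
        have "\<exists>p. Qf A p = 0 \<and> Qf B p < 0"
        proof (rule ccontr)
          assume "\<not> ?thesis"
          then have "Gamma B \<subseteq> Gamma A" using incl1[OF sA sB v vB] by force
          then show False using nn by blast
        qed
        then obtain p where p: "Qf A p = 0" "Qf B p < 0" by blast
        show False using core[OF sA sB assms(5) z' p q] H by blast
      qed
    qed
  qed
qed

end
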